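(* Let $\delta_j,\delta_k$ be coprime integers with $1<\delta_j<\delta_k$, let $r=\delta_k\bmod\delta_j$ and let $f\colon \mathcal B(\delta_j,r)\to\mathcal B(\delta_k,\delta_j)$, $f(x',y')=(y',\,x'-y'\lfloor \delta_k/\delta_j\rfloor)$. Then the irreducible elements of $\mathcal B(\delta_k,\delta_j)\setminus f(\mathcal B(\delta_j,r))$ are exactly the B\'ezout couples $(1,y)$ with $-\lfloor\delta_k/\delta_j\rfloor<y\le 0$.
   Context: For coprime positive integers $p,q$ and $i\in\{1,\ldots,\max\{p,q\}\}$, the $\lambda$-B\'ezout couple $\boldsymbol\lambda_i$ of $i$ for $(p,q)$ is the unique $(x,y)\in\mathbb Z^2$ with $xp+yq=i$ and $0<y\le p$, and the $\mu$-B\'ezout couple $\boldsymbol\mu_i$ of $i$ for $(p,q)$ is the unique $(x,y)\in\mathbb Z^2$ with $xp+yq=i$ and $0<x\le q$. $\mathcal B(p,q)$ denotes the set of all $\lambda$- and $\mu$-B\'ezout couples for $(p,q)$. $\boldsymbol\lambda_i$ is irreducible if there are no $j,k\in\{1,\ldots,\max\{p,q\}\}$ with $\boldsymbol\lambda_i=\boldsymbol\lambda_j+\boldsymbol\lambda_k$; likewise $\boldsymbol\mu_i$ is irreducible if there are no such $j,k$ with $\boldsymbol\mu_i=\boldsymbol\mu_j+\boldsymbol\mu_k$. *)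

theory Defs
  imports Main
begin

definition lambda_couple :: "int \<Rightarrow> int \<Rightarrow> int \<Rightarrow> int \<times> int" where
  "lambda_couple p q i = (THE c. fst c * p + snd c * q = i \<and> 0 < snd c \<and> snd c \<le> p)"

definition mu_couple :: "int \<Rightarrow> int \<Rightarrow> int \<Rightarrow> int \<times> int" where
  "mu_couple p q i = (THE c. fst c * p + snd c * q = i \<and> 0 < fst c \<and> fst c \<le> q)"

definition bezout_set :: "int \<Rightarrow> int \<Rightarrow> (int \<times> int) set" where
  "bezout_set p q = lambda_couple p q ` {1..max p q} \<union> mu_couple p q ` {1..max p q}"

definition pair_add :: "int \<times> int \<Rightarrow> int \<times> int \<Rightarrow> int \<times> int" where
  "pair_add a b = (fst a + fst b, snd a + snd b)"

definition lambda_irreducible :: "int \<Rightarrow> int \<Rightarrow> int \<Rightarrow> bool" where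
  "lambda_irreducible p q i \<longleftrightarrow>
     \<not> (\<exists>j\<in>{1..max p q}. \<exists>k\<in>{1..max p q}.
          lambda_couple p q i = pair_add (lambda_couple p q j) (lambda_couple p q k))"

definition mu_irreducible :: "int \<Rightarrow> int \<Rightarrow> int \<Rightarrow> bool" where
  "mu_irreducible p q i \<longleftrightarrow>
     \<not> (\<exists>j\<in>{1..max p q}. \<exists>k\<in>{1..max p q}.
          mu_couple p q i = pair_add (mu_couple p q j) (mu_couple p q k))"

text \<open>An element of B(p,q) is irreducible if it is an irreducible lambda-couple or an
  irreducible mu-couple (for 1 < min p q no couple is both).\<close>
definition bezout_irreducible :: "int \<Rightarrow> int \<Rightarrow> int \<times> int \<Rightarrow> bool" where
  "bezout_irreducible p q c \<longleftrightarrow>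
     (\<exists>i\<in>{1..max p q}. c = lambda_couple p q i \<and> lambda_irreducible p q i) \<or>
     (\<exists>i\<in>{1..max p q}. c = mu_couple p q i \<and> mu_irreducible p q i)"

end

theory Submission
  imports Defs
begin
lemma bz_uniq:
  fixes p q :: int
  assumes "coprime p q" "0 < p" "x1*p + y1*q = x2*p + y2*q"
    "0 < y1" "y1 \<le> p" "0 < y2" "y2 \<le> p"
  shows "x1 = x2 \<and> y1 = y2"
proof -
  have "(y1 - y2) * q = (x2 - x1) * p" using assms(3) by (simp add: algebra_simps)
  hence "p dvd (y1 - y2) * q" by simp
  hence "p dvd (y1 - y2)" using assms(1) by (simp add: coprime_dvd_mult_left_iff)
  then obtain k where k: "y1 - y2 = p * k" by blast
  have "k = 0"
  proof (rule ccontr)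
    assume "k \<noteq> 0"
    hence "\<bar>p*k\<bar> \<ge> p" using assms(2) by (simp add: abs_mult)
    thus False using k assms by auto
  qed
  hence "y1 = y2" using k by simp
  thus ?thesis using assms(3) assms(2) by simp
qed

lemma bz_ex:
  fixes p q i :: int
  assumes "coprime p q" "0 < p"
  shows "\<exists>x y. x*p + y*q = i \<and> 0 < y \<and> y \<le> p"
proof -
  obtain u v where uv: "u*p + v*q = 1" using bezout_int[of p q] assms(1) by auto
  define t where "t = (i*v - 1) div p"
  define y where "y = (i*v - 1) mod p + 1"
  have yt: "y = i*v - p*t" unfolding y_def t_def
    using minus_div_mult_eq_mod[of "i*v-1" p] by (simp add: algebra_simps)
  have "i - y*q = p * (i*u + t*q)"
  proof -
    have "i = i*(u*p + v*q)" using uv by simp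
    thus ?thesis unfolding yt by (simp add: algebra_simps)
  qed
  hence "(i*u + t*q)*p + y*q = i" by (simp add: algebra_simps)
  moreover have "(i*v-1) mod p < p" "0 \<le> (i*v-1) mod p" using assms(2) by simp_all
  hence "0 < y" "y \<le> p" unfolding y_def by linarith+
  ultimately show ?thesis by blast
qed

lemma lam_char:
  fixes p q i :: int
  assumes "coprime p q" "0 < p"
  shows "fst (lambda_couple p q i) * p + snd (lambda_couple p q i) * q = i
     \<and> 0 < snd (lambda_couple p q i) \<and> snd (lambda_couple p q i) \<le> p"
    and "x*p + y*q = i \<Longrightarrow> 0 < y \<Longrightarrow> y \<le> p \<Longrightarrow> lambda_couple p q i = (x,y)"
proof -
  obtain x0 y0 where e: "x0*p + y0*q = i \<and> 0 < y0 \<and> y0 \<le> p" using bz_ex assms by blast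
  have th: "lambda_couple p q i = (x0,y0)" unfolding lambda_couple_def
    apply (rule the_equality)
    using e apply simp
    using bz_uniq[OF assms] e by (metis prod.collapse)
  show "fst (lambda_couple p q i) * p + snd (lambda_couple p q i) * q = i
     \<and> 0 < snd (lambda_couple p q i) \<and> snd (lambda_couple p q i) \<le> p"
    using th e by simp
  show "x*p + y*q = i \<Longrightarrow> 0 < y \<Longrightarrow> y \<le> p \<Longrightarrow> lambda_couple p q i = (x,y)"
    using th e bz_uniq[OF assms, of x y x0 y0] by auto
qed

lemma mu_char:
  fixes p q i :: int
  assumes "coprime p q" "0 < q"
  shows "fst (mu_couple p q i) * p + snd (mu_couple p q i) * q = i
     \<and> 0 < fst (mu_couple p q i) \<and> fst (mu_couple p q i) \<le> q"
    and "x*p + y*q = i \<Longrightarrow> 0 < x \<Longrightarrow> x \<le> q \<Longrightarrow> mu_couple p q i = (x,y)"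
proof -
  have cq: "coprime q p" using assms(1) by (simp add: coprime_commute)
  obtain y0 x0 where e: "y0*q + x0*p = i \<and> 0 < x0 \<and> x0 \<le> q" using bz_ex[OF cq assms(2)] by blast
  have th: "mu_couple p q i = (x0,y0)" unfolding mu_couple_def
    apply (rule the_equality)
    using e apply (simp add: algebra_simps)
    using bz_uniq[OF cq assms(2)] e by (metis prod.collapse add.commute)
  show "fst (mu_couple p q i) * p + snd (mu_couple p q i) * q = i
     \<and> 0 < fst (mu_couple p q i) \<and> fst (mu_couple p q i) \<le> q"
    using th e by (simp add: algebra_simps)
  show "x*p + y*q = i \<Longrightarrow> 0 < x \<Longrightarrow> x \<le> q \<Longrightarrow> mu_couple p q i = (x,y)"
    using th e bz_uniq[OF cq assms(2), of y x y0 x0] by (auto simp: algebra_simps)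
qed

lemma bez_char:
  fixes p q :: int
  assumes "coprime p q" "0 < p" "0 < q"
  shows "c \<in> bezout_set p q \<longleftrightarrow> (1 \<le> fst c*p+snd c*q \<and> fst c*p+snd c*q \<le> max p q \<and>
     ((0<snd c \<and> snd c \<le> p) \<or> (0 < fst c \<and> fst c \<le> q)))"
proof
  assume "c \<in> bezout_set p q"
  then obtain i where i: "i \<in> {1..max p q}" "c = lambda_couple p q i \<or> c = mu_couple p q i"
    unfolding bezout_set_def by blast
  thus "1 \<le> fst c*p+snd c*q \<and> fst c*p+snd c*q \<le> max p q \<and>
     ((0<snd c \<and> snd c \<le> p) \<or> (0 < fst c \<and> fst c \<le> q))"
    using lam_char(1)[OF assms(1,2), of i] mu_char(1)[OF assms(1,3), of i] by auto
next
  assume h: "1 \<le> fst c*p+snd c*q \<and> fst c*p+snd c*q \<le> max p q \<and>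
     ((0<snd c \<and> snd c \<le> p) \<or> (0 < fst c \<and> fst c \<le> q))"
  define i where "i = fst c*p+snd c*q"
  have iin: "i \<in> {1..max p q}" using h i_def by auto
  show "c \<in> bezout_set p q"
  proof (cases "0<snd c \<and> snd c \<le> p")
    case True
    hence "c = lambda_couple p q i" using lam_char(2)[OF assms(1,2), of "fst c" "snd c" i] i_def by simp
    thus ?thesis using iin unfolding bezout_set_def by blast
  next
    case False
    hence "0 < fst c \<and> fst c \<le> q" using h by auto
    hence "c = mu_couple p q i" using mu_char(2)[OF assms(1,3), of "fst c" "snd c" i] i_def by simp
    thus ?thesis using iin unfolding bezout_set_def by blast
  qed
qed

theorem proposition3p9:
  fixes dj dk :: int
  assumes "coprime dj dk" and "1 < dj" and "dj < dk"
  shows "{c \<in> bezout_set dk dj -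
              (\<lambda>(x', y'). (y', x' - y' * (dk div dj))) ` bezout_set dj (dk mod dj).
            bezout_irreducible dk dj c}
         = {(1, y) | y. - (dk div dj) < y \<and> y \<le> 0}"
proof -
  define p where "p = dk"
  define q where "q = dj"
  define m where "m = dk div dj"
  define r where "r = dk mod dj"
  define g where "g = (\<lambda>(x'::int, y'::int). (y', x' - y' * m))"
  have q1: "1 < q" and qp: "q < p" using assms p_def q_def by auto
  have cpq: "coprime p q" using assms(1) p_def q_def by (simp add: coprime_commute)
  have pdec: "p = m*q + r" unfolding p_def q_def m_def r_def by simp
  have r0: "0 \<le> r" "r < q" unfolding r_def q_def using q1 q_def by simp_all
  have rne: "r \<noteq> 0"
  proof
    assume "r = 0"
    hence "q dvd p" using pdec by simp
    hence "q dvd gcd p q" by simp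
    thus False using cpq q1 by (simp add: zdvd_imp_le)
  qed
  have rpos: "0 < r" using r0 rne by simp
  have m1: "1 \<le> m"
  proof (rule ccontr)
    assume "\<not> 1 \<le> m"
    hence "m \<le> 0" by simp
    hence "m*q \<le> 0" using q1 by (simp add: mult_nonpos_nonneg)
    thus False using pdec r0 qp by linarith
  qed
  have cqr: "coprime q r" unfolding q_def r_def using assms(1) q1 q_def
    by (simp add: coprime_mod_right_iff)
  have maxpq: "max p q = p" and maxqr: "max q r = q" using qp r0 by auto
  have img: "c \<in> g ` bezout_set q r \<longleftrightarrow> (snd c + fst c * m, fst c) \<in> bezout_set q r" for c
  proof
    assume "c \<in> g ` bezout_set q r"
    then obtain a b where "(a,b) \<in> bezout_set q r" "c = g (a,b)" by auto
    thus "(snd c + fst c * m, fst c) \<in> bezout_set q r" unfolding g_def by simp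
  next
    assume h: "(snd c + fst c * m, fst c) \<in> bezout_set q r"
    have "c = g (snd c + fst c * m, fst c)" unfolding g_def by (cases c) simp
    thus "c \<in> g ` bezout_set q r" using h by blast
  qed
  have idx: "(y + x*m)*q + x*r = x*p + y*q" for x y :: int
    unfolding pdec by (simp add: algebra_simps)
  have Bpq: "c \<in> bezout_set p q \<longleftrightarrow> (1 \<le> fst c*p+snd c*q \<and> fst c*p+snd c*q \<le> p \<and>
     ((0<snd c \<and> snd c \<le> p) \<or> (0 < fst c \<and> fst c \<le> q)))" for c
    using bez_char[OF cpq] qp q1 maxpq by simp
  have Bqr: "c \<in> bezout_set q r \<longleftrightarrow> (1 \<le> fst c*q+snd c*r \<and> fst c*q+snd c*r \<le> q \<and>
     ((0<snd c \<and> snd c \<le> q) \<or> (0 < fst c \<and> fst c \<le> r)))" for c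
    using bez_char[OF cqr] rpos q1 maxqr by simp
  have imgiff: "(x,y) \<in> g ` bezout_set q r \<longleftrightarrow> x*p + y*q \<le> q"
    if xy: "(x,y) \<in> bezout_set p q" for x y
  proof
    assume "(x,y) \<in> g ` bezout_set q r"
    thus "x*p + y*q \<le> q" using img[of "(x,y)"] Bqr idx by simp
  next
    assume iq: "x*p + y*q \<le> q"
    have b: "1 \<le> x*p+y*q" "((0<y \<and> y \<le> p) \<or> (0 < x \<and> x \<le> q))" using xy Bpq by auto
    show "(x,y) \<in> g ` bezout_set q r"
    proof (cases "0 < x")
      case True
      have "x \<le> q"
      proof (rule ccontr)
        assume "\<not> x \<le> q"
        hence y: "0 < y" using b True by auto
        have "x*p \<ge> p" using True qp q1 by simp
        moreover have "y*q \<ge> q" using y q1 by simp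
        ultimately show False using iq qp q1 by linarith
      qed
      thus ?thesis using img[of "(x,y)"] Bqr idx b iq True by simp
    next
      case False
      hence y: "0 < y" "y \<le> p" using b by auto
      have xgt: "x > -q"
      proof (rule ccontr)
        assume "\<not> x > -q"
        hence "x \<le> -q" by simp
        hence "x*p \<le> (-q)*p" using qp q1 by (intro mult_right_mono) auto
        moreover have "y*q \<le> p*q" using y q1 by simp
        ultimately show False using b by (simp add: algebra_simps)
      qed
      have a1: "(y + x*m)*q = x*p+y*q - x*r" using idx[of y x] by simp
      have "- x*r \<ge> 0" using False rpos by (simp add: mult_nonpos_nonneg)
      hence "(y + x*m)*q > 0" using a1 b by simp
      hence apos: "y + x*m > 0" using q1 by (simp add: zero_less_mult_iff)
      have ale: "y + x*m \<le> r"
      proof (rule ccontr)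
        assume "\<not> y + x*m \<le> r"
        hence "(y+x*m)*q \<ge> (r+1)*q" using q1 by (simp add: mult_right_mono)
        hence "- x*r \<ge> r*q" using a1 iq by (simp add: algebra_simps)
        hence "(-x)*r \<ge> q*r" by (simp add: algebra_simps)
        hence "-x \<ge> q" using rpos mult_le_cancel_right_pos[of r q "-x"] by simp
        thus False using xgt by simp
      qed
      show ?thesis using img[of "(x,y)"] Bqr idx b iq apos ale by simp
    qed
  qed
  have gdef: "(\<lambda>(x', y'). (y', x' - y' * (dk div dj))) = g" unfolding g_def m_def by simp
  have main: "{c \<in> bezout_set p q - g ` bezout_set q r. bezout_irreducible p q c}
    = {(1, y) | y. - m < y \<and> y \<le> 0}"
  proof (intro set_eqI iffI)
    fix c :: "int \<times> int" assume "c \<in> {c \<in> bezout_set p q - g ` bezout_set q r. bezout_irreducible p q c}"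
    then obtain x y where c: "c = (x,y)" "(x,y) \<in> bezout_set p q" "(x,y) \<notin> g ` bezout_set q r"
      "bezout_irreducible p q (x,y)" by (cases c) auto
    have iq: "x*p + y*q > q" using c imgiff by force
    have ip: "x*p + y*q \<le> p" using c(2) Bpq by simp
    have "(\<exists>i\<in>{1..p}. (x,y) = lambda_couple p q i \<and> lambda_irreducible p q i) \<or>
          (\<exists>i\<in>{1..p}. (x,y) = mu_couple p q i \<and> mu_irreducible p q i)"
      using c(4) unfolding bezout_irreducible_def maxpq by simp
    then show "c \<in> {(1, y) | y. - m < y \<and> y \<le> 0}"
    proof
      assume "\<exists>i\<in>{1..p}. (x,y) = lambda_couple p q i \<and> lambda_irreducible p q i"
      then obtain i where i: "i \<in> {1..p}" "(x,y) = lambda_couple p q i" "lambda_irreducible p q i" by blast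
      have li: "x*p + y*q = i" "0 < y" "y \<le> p" using lam_char(1)[OF cpq, of i] qp q1 i(2)[symmetric] by auto
      have y2: "y \<ge> 2"
      proof (rule ccontr)
        assume "\<not> y \<ge> 2"
        hence "y = 1" using li by simp
        hence yq: "y*q = q" by simp
        have xp1: "x*p > 0" using yq iq by linarith
        have xp2: "x*p < 1*p" using yq ip q1 by linarith
        note xp = xp1 xp2
        have "x > 0" using xp(1) qp q1 by (simp add: zero_less_mult_iff)
        moreover have "x < 1" using xp(2) qp q1 mult_less_cancel_right_pos[of p x 1] by simp
        ultimately show False by simp
      qed
      have "lambda_couple p q (i - q) = (x, y - 1)"
        using lam_char(2)[OF cpq, of x "y-1" "i-q"] li y2 qp q1 by (simp add: algebra_simps)
      moreover have "lambda_couple p q q = (0, 1)"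
        using lam_char(2)[OF cpq, of 0 1 q] qp q1 by simp
      ultimately have "lambda_couple p q i = pair_add (lambda_couple p q (i-q)) (lambda_couple p q q)"
        using i(2) by (simp add: pair_add_def)
      moreover have "i - q \<in> {1..p}" "q \<in> {1..p}" using li iq ip qp q1 by auto
      ultimately show ?thesis using i(3) unfolding lambda_irreducible_def maxpq by blast
    next
      assume "\<exists>i\<in>{1..p}. (x,y) = mu_couple p q i \<and> mu_irreducible p q i"
      then obtain i where i: "i \<in> {1..p}" "(x,y) = mu_couple p q i" "mu_irreducible p q i" by blast
      have mi: "x*p + y*q = i" "0 < x" "x \<le> q" using mu_char(1)[OF cpq, of i] qp q1 i(2)[symmetric] by auto
      have x1: "x = 1"
      proof (rule ccontr)
        assume "x \<noteq> 1"
        hence x2: "x \<ge> 2" using mi by simp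
        define y0 where "y0 = (i - 1 - p) div q"
        define j where "j = p + y0*q"
        have jeq: "j = i - 1 - (i - 1 - p) mod q" unfolding j_def y0_def
          using minus_div_mult_eq_mod[of "i-1-p" q] by (simp add: algebra_simps)
        have "(i - 1 - p) mod q < q" "0 \<le> (i - 1 - p) mod q" using q1 by simp_all
        hence jb: "j \<le> i - 1" "j \<ge> i - q" using jeq by linarith+
        have "mu_couple p q j = (1, y0)" using mu_char(2)[OF cpq, of 1 y0 j] j_def q1 by simp
        moreover have "mu_couple p q (i - j) = (x - 1, y - y0)"
          using mu_char(2)[OF cpq, of "x-1" "y-y0" "i-j"] j_def q1 mi x2 by (simp add: algebra_simps)
        ultimately have "mu_couple p q i = pair_add (mu_couple p q j) (mu_couple p q (i-j))"
          using i(2) by (simp add: pair_add_def)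
        moreover have "j \<in> {1..p}" "i - j \<in> {1..p}" using jb mi iq ip qp q1 by auto
        ultimately show False using i(3) unfolding mu_irreducible_def maxpq by blast
      qed
      have "y*q \<le> 0" using ip x1 by simp
      hence yle: "y \<le> 0" using q1 by (simp add: mult_le_0_iff)
      have "(y + m)*q > 0" using iq x1 pdec r0 by (simp add: algebra_simps)
      hence "y + m > 0" using q1 by (simp add: zero_less_mult_iff)
      thus ?thesis using c(1) x1 yle by simp
    qed
  next
    fix c :: "int \<times> int" assume "c \<in> {(1, y) | y. - m < y \<and> y \<le> 0}"
    then obtain y where c: "c = (1,y)" "-m < y" "y \<le> 0" by blast
    define i where "i = p + y*q"
    have "y*q \<le> 0" using c q1 by (simp add: mult_le_0_iff)
    hence ip: "i \<le> p" using i_def by simp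
    have "(m+y)*q \<ge> q" using c q1 by simp
    hence iq: "i > q" using i_def pdec rpos by (simp add: algebra_simps)
    have inB: "(1,y) \<in> bezout_set p q" using Bpq ip iq q1 i_def by simp
    have nimg: "(1,y) \<notin> g ` bezout_set q r" using imgiff[OF inB] iq i_def by simp
    have mc: "mu_couple p q i = (1,y)" using mu_char(2)[OF cpq, of 1 y i] i_def q1 by simp
    have "mu_irreducible p q i"
      unfolding mu_irreducible_def
    proof
      assume "\<exists>j\<in>{1..max p q}. \<exists>k\<in>{1..max p q}.
          mu_couple p q i = pair_add (mu_couple p q j) (mu_couple p q k)"
      then obtain j k where "mu_couple p q i = pair_add (mu_couple p q j) (mu_couple p q k)" by blast
      moreover have "fst (mu_couple p q j) \<ge> 1" "fst (mu_couple p q k) \<ge> 1"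
        using mu_char(1)[OF cpq] q1 by (simp_all add: int_one_le_iff_zero_less)
      ultimately show False using mc by (simp add: pair_add_def)
    qed
    hence "bezout_irreducible p q (1,y)" unfolding bezout_irreducible_def maxpq
      using mc ip iq q1 by force
    thus "c \<in> {c \<in> bezout_set p q - g ` bezout_set q r. bezout_irreducible p q c}"
      using c inB nimg by simp
  qed
  show ?thesis using main unfolding g_def p_def q_def m_def r_def .
qed

end
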